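(* Let $L\subset\mathbb{C}$ be a lattice. If for some $p_0\in\mathbb{C}$ and some $\alpha\in(0,\pi)$ there are more than three pairs of periodic trajectories of the billiard associated to $L$ which pass through $p_0$ and form the angle $\alpha$ at $p_0$ (equivalently: there are at least four directions $v\in\mathbb{C}^*$, pairwise not real-proportional, with $v\in\mathbb{R}\cdot L$ and $e^{i\alpha}v\in\mathbb{R}\cdot L$), then the elliptic curve $\mathbb{C}/L$ has complex multiplication. Conversely, if $\mathbb{C}/L$ has complex multiplication then for infinitely many $\alpha\in(0,\pi)$ and every $p_0\in\mathbb{C}$ there are infinitely many pairs of periodic trajectories passing through $p_0$ and forming the angle $\alpha$ at $p_0$.
   Context: The billiard associated to a lattice $L\subset\mathbb{C}$ is the billiard on a parallelogram table determined by $L$; directions are nonzero complex numbers, and a trajectory with direction $v\in\mathbb{C}^*$ is periodic if and only if $v\in\mathbb{R}\cdot L=\{t\lambda: t\in\mathbb{R},\lambda\in L\}$. Two periodic trajectories through $p_0$ with directions $v,v'$ form the angle $\alpha$ at $p_0$ if $v'=e^{i\alpha}v$ up to a positive real factor; pairs are counted up to real proportionality of the direction $v$. $\mathbb{C}/L$ has complex multiplication if its endomorphism ring is strictly larger than $\mathbb{Z}$, i.e. if $L$ is homothetic to $\mathbb{Z}\tau+\mathbb{Z}$ with $\tau$ an imaginary quadratic number. *)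

theory Defs
  imports "HOL-Analysis.Analysis"
begin

definition lattice_of :: "complex \<Rightarrow> complex \<Rightarrow> complex set" where
  "lattice_of w1 w2 = {of_int m * w1 + of_int n * w2 | m n. True}"

definition is_lattice :: "complex set \<Rightarrow> bool" where
  "is_lattice L \<longleftrightarrow> (\<exists>w1 w2. Im (cnj w1 * w2) \<noteq> 0 \<and> L = lattice_of w1 w2)"

definition real_span_dirs :: "complex set \<Rightarrow> complex set" where
  "real_span_dirs L = {complex_of_real t * l | t l. l \<in> L}"

definition angle_pair_dirs :: "complex set \<Rightarrow> real \<Rightarrow> complex set" where
  "angle_pair_dirs L \<alpha> =
     {v. v \<noteq> 0 \<and> v \<in> real_span_dirs L \<and> cis \<alpha> * v \<in> real_span_dirs L}"

definition real_proportional :: "complex \<Rightarrow> complex \<Rightarrow> bool" where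
  "real_proportional v w \<longleftrightarrow> (\<exists>t::real. w = complex_of_real t * v)"

definition pairwise_nonprop :: "complex set \<Rightarrow> bool" where
  "pairwise_nonprop S \<longleftrightarrow> (\<forall>v\<in>S. \<forall>w\<in>S. v \<noteq> w \<longrightarrow> \<not> real_proportional v w)"

definition imag_quadratic :: "complex \<Rightarrow> bool" where
  "imag_quadratic \<tau> \<longleftrightarrow> Im \<tau> \<noteq> 0 \<and>
     (\<exists>a b c :: int. a \<noteq> 0 \<and> of_int a * \<tau>^2 + of_int b * \<tau> + of_int c = 0)"

definition has_CM :: "complex set \<Rightarrow> bool" where
  "has_CM L \<longleftrightarrow> (\<exists>c \<tau>. c \<noteq> 0 \<and> imag_quadratic \<tau> \<and> L = (\<lambda>z. c * z) ` lattice_of \<tau> 1)"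

end

theory Submission
  imports Defs
begin

lemma cramer:
  fixes a1 a2 b1 b2 z1 z2 :: real and w1 w2 :: complex
  assumes D: "a1*b2 - a2*b1 \<noteq> 0"
  shows "of_real z1 * w1 + of_real z2 * w2 =
    of_real ((z1*b2 - z2*b1)/(a1*b2-a2*b1)) * (of_real a1 * w1 + of_real a2 * w2)
  + of_real ((a1*z2 - a2*z1)/(a1*b2-a2*b1)) * (of_real b1*w1 + of_real b2*w2)"
proof -
  define x where "x = (z1*b2 - z2*b1)/(a1*b2-a2*b1)"
  define y where "y = (a1*z2 - a2*z1)/(a1*b2-a2*b1)"
  have "x*a1 + y*b1 = ((z1*b2 - z2*b1)*a1 + (a1*z2 - a2*z1)*b1)/(a1*b2-a2*b1)"
    unfolding x_def y_def by (simp add: add_divide_distrib times_divide_eq_left)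
  also have "(z1*b2 - z2*b1)*a1 + (a1*z2 - a2*z1)*b1 = z1 * (a1*b2-a2*b1)" by (simp add: algebra_simps)
  finally have e1: "x*a1 + y*b1 = z1" using D by simp
  have "x*a2 + y*b2 = ((z1*b2 - z2*b1)*a2 + (a1*z2 - a2*z1)*b2)/(a1*b2-a2*b1)"
    unfolding x_def y_def by (simp add: add_divide_distrib times_divide_eq_left)
  also have "(z1*b2 - z2*b1)*a2 + (a1*z2 - a2*z1)*b2 = z2 * (a1*b2-a2*b1)" by (simp add: algebra_simps)
  finally have e2: "x*a2 + y*b2 = z2" using D by simp
  have "of_real x * (of_real a1 * w1 + of_real a2 * w2) + of_real y * (of_real b1*w1 + of_real b2*w2)
      = of_real (x*a1 + y*b1) * w1 + of_real (x*a2 + y*b2) * w2"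
    by (simp add: algebra_simps)
  thus ?thesis unfolding e1 e2 x_def[symmetric] y_def[symmetric] by simp
qed

lemma scale2: "(of_real x::complex) * (of_real a * w1 + of_real b * w2) = of_real (x*a) * w1 + of_real (x*b) * w2"
  by (simp add: algebra_simps)

lemma det_nz:
  fixes a1 a2 b1 b2 :: real
  assumes l1: "l1 = of_real a1 * w1 + of_real a2 * w2" and l2: "l2 = of_real b1 * w1 + of_real b2 * w2"
    and nz: "l1 \<noteq> 0" and np: "\<not> real_proportional l1 l2"
  shows "a1*b2 - a2*b1 \<noteq> 0"
proof
  assume D: "a1*b2 - a2*b1 = 0"
  show False
  proof (cases "a1 = 0")
    case False
    have h1: "b1/a1*a1 = b1" using False by simp
    have h2: "b1/a1*a2 = b2" using False D by (simp add: field_simps)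
    have "of_real (b1/a1) * l1 = l2" unfolding l1 l2 scale2 h1 h2 by simp
    thus False using np unfolding real_proportional_def by metis
  next
    case True
    with nz l1 have a2: "a2 \<noteq> 0" by auto
    with True D have b1: "b1 = 0" by simp
    have "of_real (b2/a2) * l1 = l2" unfolding l1 l2 scale2 using True a2 b1 by simp
    thus False using np unfolding real_proportional_def by metis
  qed
qed

lemma indep:
  assumes np: "\<not> real_proportional b1 b2" and nz: "b1 \<noteq> 0"
    and e: "of_real x * b1 + of_real y * b2 = 0"
  shows "x = 0 \<and> y = 0"
proof (cases "y = 0")
  case True
  with e nz show ?thesis by simp
next
  case False
  from e have "of_real y * b2 = - of_real x * b1" by (simp add: eq_neg_iff_add_eq_0 add.commute)
  hence "b2 = of_real (-x/y) * b1" using False by (simp add: field_simps)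
  thus ?thesis using np unfolding real_proportional_def by blast
qed

lemma np_transfer:
  assumes np: "\<not> real_proportional v1 v2" and "v1 = of_real t1 * l1" "v2 = of_real t2 * l2" "t1 \<noteq> 0"
  shows "\<not> real_proportional l1 l2"
proof
  assume "real_proportional l1 l2"
  then obtain u where u: "l2 = of_real u * l1" unfolding real_proportional_def by blast
  have "v2 = of_real (t2*u/t1) * v1" using assms(2-4) u by (simp add: field_simps)
  thus False using np unfolding real_proportional_def by blast
qed

lemma np_transfer2:
  assumes np: "\<not> real_proportional l1 l2" and e1: "\<mu>*l1 = of_real r1 * l1'" and e2: "\<mu>*l2 = of_real r2 * l2'"
    and mu: "\<mu> \<noteq> 0" and r1: "r1 \<noteq> 0"
  shows "\<not> real_proportional l1' l2'"
proof
  assume "real_proportional l1' l2'"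
  then obtain u where u: "l2' = of_real u * l1'" unfolding real_proportional_def by blast
  have "\<mu> * l2 = \<mu> * (of_real (r2*u/r1) * l1)"
  proof -
    have "\<mu> * l2 = of_real (r2*u) * l1'" using e2 u by simp
    also have "\<dots> = of_real (r2*u/r1) * (of_real r1 * l1')" using r1 by simp
    also have "\<dots> = of_real (r2*u/r1) * (\<mu> * l1)" using e1 by simp
    also have "\<dots> = \<mu> * (of_real (r2*u/r1) * l1)" by (simp add: algebra_simps)
    finally show ?thesis .
  qed
  hence "l2 = of_real (r2*u/r1) * l1" using mu by (metis mult_left_cancel)
  thus False using np unfolding real_proportional_def by blast
qed

lemma latE:
  assumes "l \<in> lattice_of w1 w2"
  obtains a b where "a \<in> \<rat>" "b \<in> \<rat>" "l = of_real a * w1 + of_real b * w2"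
proof -
  obtain m n :: int where "l = of_int m * w1 + of_int n * w2" using assms unfolding lattice_of_def by blast
  hence "l = of_real (of_int m) * w1 + of_real (of_int n) * w2" by simp
  thus ?thesis using that Rats_of_int by blast
qed

lemma dirE:
  assumes "v \<in> angle_pair_dirs L \<alpha>"
  obtains t l r l' where "t \<noteq> 0" "v = of_real t * l" "l \<in> L" "l \<noteq> 0" "r \<noteq> 0" "l' \<in> L" "l' \<noteq> 0"
     "cis \<alpha> * l = of_real r * l'"
proof -
  from assms have v0: "v \<noteq> 0" and v1: "v \<in> real_span_dirs L" and v2: "cis \<alpha> * v \<in> real_span_dirs L"
    unfolding angle_pair_dirs_def by auto
  obtain t l where tl: "v = of_real t * l" "l \<in> L" using v1 unfolding real_span_dirs_def by blast
  obtain s l' where sl: "cis \<alpha> * v = of_real s * l'" "l' \<in> L" using v2 unfolding real_span_dirs_def by blast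
  have t0: "t \<noteq> 0" and l0: "l \<noteq> 0" using v0 tl by auto
  have "cis \<alpha> * v \<noteq> 0" using v0 by simp
  hence s0: "s \<noteq> 0" and l'0: "l' \<noteq> 0" using sl by auto
  have "cis \<alpha> * l = of_real (s/t) * l'"
  proof -
    have "cis \<alpha> * l = (cis \<alpha> * v) / of_real t" using tl t0 by simp
    also have "\<dots> = of_real (s/t) * l'" using sl by (simp add: field_simps)
    finally show ?thesis .
  qed
  moreover have "s/t \<noteq> 0" using s0 t0 by simp
  ultimately show ?thesis using that t0 tl l0 sl l'0 by blast
qed

lemma rat_denom:
  fixes x :: real
  assumes "x \<in> \<rat>"
  obtains n :: int where "n > 0" "of_int n * x \<in> \<int>"
proof -
  obtain i :: int and n :: nat where "n \<noteq> 0" "x = of_int i / real n"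
    using assms unfolding Rats_eq_int_div_nat by blast
  hence "of_int (int n) * x = of_int i" "int n > 0" by auto
  thus ?thesis using that by (metis Ints_of_int)
qed

lemma lattice_scale: "(\<lambda>z. c*z) ` lattice_of a b = lattice_of (c*a) (c*b)"
proof -
  have "(\<lambda>z. c*z) ` lattice_of a b = {c * (of_int m * a + of_int n * b) | m n. True}"
    unfolding lattice_of_def by blast
  also have "\<dots> = lattice_of (c*a) (c*b)" unfolding lattice_of_def by (simp add: algebra_simps)
  finally show ?thesis .
qed


lemma lat_mem: "of_int m * w1 + of_int n * w2 \<in> lattice_of w1 w2"
  unfolding lattice_of_def by blast

lemma part2:
  assumes "has_CM L"
  shows "infinite {\<alpha>\<in>{0<..<pi}. \<exists>S. infinite S \<and> S \<subseteq> angle_pair_dirs L \<alpha> \<and> pairwise_nonprop S}"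
proof -
  obtain c \<tau> where c: "c \<noteq> 0" and iq: "imag_quadratic \<tau>" and L: "L = (\<lambda>z. c*z) ` lattice_of \<tau> 1"
    using assms unfolding has_CM_def by blast
  from iq obtain a b d :: int where a: "a \<noteq> 0" and eq: "of_int a * \<tau>^2 + of_int b * \<tau> + of_int d = 0"
     and Imt: "Im \<tau> \<noteq> 0"
    unfolding imag_quadratic_def by blast
  define \<epsilon> :: int where "\<epsilon> = (if Im \<tau> > 0 then 1 else -1)"
  have Ims: "Im (of_int \<epsilon> * \<tau>) > 0" using Imt by (auto simp: \<epsilon>_def)
  define \<mu> where "\<mu> k = of_int \<epsilon> * \<tau> + of_nat k" for k::nat
  have Imu: "Im (\<mu> k) = Im (of_int \<epsilon> * \<tau>)" for k by (simp add: \<mu>_def)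
  have mu0: "\<mu> k \<noteq> 0" for k using Imu[of k] Ims by auto
  define \<alpha> where "\<alpha> k = Arg (\<mu> k)" for k
  define P where "P = (\<lambda>\<alpha>. \<alpha>\<in>{0<..<pi} \<and> (\<exists>S. infinite S \<and> S \<subseteq> angle_pair_dirs L \<alpha> \<and> pairwise_nonprop S))"
  define S where "S = range (\<lambda>n::nat. c * (of_nat n * \<tau> + 1))"
  have nz: "of_nat n * \<tau> + 1 \<noteq> 0" for n :: nat
  proof
    assume h: "of_nat n * \<tau> + 1 = 0"
    hence "Im (of_nat n * \<tau> + 1) = 0" by simp
    hence "n = 0" using Imt by simp
    thus False using h by simp
  qed
  have injS: "inj (\<lambda>n::nat. c * (of_nat n * \<tau> + 1))"
  proof (rule injI)
    fix n m :: nat assume "c * (of_nat n * \<tau> + 1) = c * (of_nat m * \<tau> + 1)"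
    hence "of_nat n * \<tau> = of_nat m * \<tau>" using c by simp
    thus "n = m" using Imt by auto
  qed
  have Sinf: "infinite S" unfolding S_def using injS range_inj_infinite by blast
  have Snp: "pairwise_nonprop S"
    unfolding pairwise_nonprop_def real_proportional_def S_def
  proof (clarify)
    fix n m :: nat and t :: real
    assume ne: "c * (of_nat n * \<tau> + 1) \<noteq> c * (of_nat m * \<tau> + 1)"
      and h: "c * (of_nat m * \<tau> + 1) = complex_of_real t * (c * (of_nat n * \<tau> + 1))"
    from h c have h2: "of_nat m * \<tau> + 1 = complex_of_real t * (of_nat n * \<tau> + 1)" by simp
    hence "Im (of_nat m * \<tau> + 1) = Im (complex_of_real t * (of_nat n * \<tau> + 1))" by simp
    hence i: "real m * Im \<tau> = t * real n * Im \<tau>" by simp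
    hence im: "real m = t * real n" using Imt by simp
    from h2 have "Re (of_nat m * \<tau> + 1) = Re (complex_of_real t * (of_nat n * \<tau> + 1))" by simp
    hence "real m * Re \<tau> + 1 = t * (real n * Re \<tau> + 1)" by simp
    with im have "t = 1" by (simp add: algebra_simps)
    with im have "m = n" by simp
    with ne show False by simp
  qed
  have lat: "of_int a * \<mu> k * (of_nat n * \<tau> + 1) =
     of_int (\<epsilon> * (a - int n * b) + a * int k * int n) * \<tau> + of_int (a * int k - \<epsilon> * int n * d)" for k n
  proof -
    have "of_int a * \<tau>^2 = (of_int a * \<tau>^2 + of_int b * \<tau> + of_int d) - (of_int b * \<tau> + of_int d)" by simp
    hence t2: "of_int a * \<tau>^2 = - (of_int b * \<tau> + of_int d)" using eq by simp
    have "of_int a * \<mu> k * (of_nat n * \<tau> + 1) = of_int \<epsilon> * of_nat n * (of_int a * \<tau>^2) + of_int \<epsilon> * of_int a * \<tau>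
        + of_int a * of_nat k * of_nat n * \<tau> + of_int a * of_nat k"
      by (simp add: \<mu>_def algebra_simps power2_eq_square)
    also have "\<dots> = of_int (\<epsilon> * (a - int n * b) + a * int k * int n) * \<tau> + of_int (a * int k - \<epsilon> * int n * d)"
      unfolding t2 by (simp add: algebra_simps)
    finally show ?thesis .
  qed
  have key: "P (\<alpha> k)" for k
  proof -
    have "\<alpha> k \<in> {0<..<pi}" unfolding \<alpha>_def using Arg_lt_pi[of "\<mu> k"] Imu[of k] Ims by simp
    moreover have "S \<subseteq> angle_pair_dirs L (\<alpha> k)"
    proof
      fix v assume "v \<in> S"
      then obtain n :: nat where v: "v = c * (of_nat n * \<tau> + 1)" unfolding S_def by blast
      have "v \<noteq> 0" using v c nz by simp
      moreover have vL: "v \<in> L" unfolding L v using lat_mem[of "int n" \<tau> 1 1] by (intro imageI) simp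
      have "v = complex_of_real 1 * v" by simp
      hence "v \<in> real_span_dirs L" unfolding real_span_dirs_def using vL by blast
      moreover have "cis (\<alpha> k) * v \<in> real_span_dirs L"
      proof -
        define l where "l = c * (of_int (\<epsilon> * (a - int n * b) + a * int k * int n) * \<tau> + of_int (a * int k - \<epsilon> * int n * d))"
        have lL: "l \<in> L" unfolding L l_def using lat_mem[of _ \<tau> _ 1] by (metis image_eqI mult.right_neutral)
        have cm: "cmod (\<mu> k) \<noteq> 0" using mu0 by simp
        have "cis (\<alpha> k) * v = \<mu> k / complex_of_real (cmod (\<mu> k)) * v"
          unfolding \<alpha>_def using mu0 by (simp add: cis_Arg sgn_div_norm divide_inverse scaleR_conv_of_real mult.commute)
        also have "\<dots> = complex_of_real (1 / (of_int a * cmod (\<mu> k))) * l"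
          unfolding l_def lat[symmetric] v using a cm by (simp add: field_simps)
        finally show ?thesis unfolding real_span_dirs_def using lL by blast
      qed
      ultimately show "v \<in> angle_pair_dirs L (\<alpha> k)" unfolding angle_pair_dirs_def by blast
    qed
    ultimately show ?thesis unfolding P_def using Sinf Snp by blast
  qed
  have inj: "inj \<alpha>"
  proof (rule injI)
    fix k j assume "\<alpha> k = \<alpha> j"
    hence "cis (\<alpha> k) = cis (\<alpha> j)" by simp
    hence "sgn (\<mu> k) = sgn (\<mu> j)" unfolding \<alpha>_def using mu0 by (simp add: cis_Arg)
    hence e: "\<mu> k / complex_of_real (cmod (\<mu> k)) = \<mu> j / complex_of_real (cmod (\<mu> j))"
      by (simp add: sgn_div_norm divide_inverse scaleR_conv_of_real mult.commute)
    hence "Im (\<mu> k) / cmod (\<mu> k) = Im (\<mu> j) / cmod (\<mu> j)"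
      by (metis Im_divide_of_real)
    hence "cmod (\<mu> k) = cmod (\<mu> j)" using Imu[of k] Imu[of j] Ims mu0 by (auto simp: field_simps)
    with e have "\<mu> k = \<mu> j" using mu0 by (simp add: field_simps)
    thus "k = j" by (simp add: \<mu>_def)
  qed
  have "infinite (range \<alpha>)" using inj range_inj_infinite by blast
  moreover have "range \<alpha> \<subseteq> Collect P" using key by blast
  ultimately have "infinite (Collect P)" using infinite_super by blast
  thus ?thesis unfolding P_def by simp
qed


lemma part1:
  assumes w: "Im (cnj w1 * w2) \<noteq> 0" and L: "L = lattice_of w1 w2"
    and al: "0 < \<alpha>" "\<alpha> < pi"
    and v1: "v1 \<in> angle_pair_dirs L \<alpha>" and v2: "v2 \<in> angle_pair_dirs L \<alpha>" and v3: "v3 \<in> angle_pair_dirs L \<alpha>"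
    and n12: "\<not> real_proportional v1 v2" and n13: "\<not> real_proportional v1 v3"
    and n23: "\<not> real_proportional v2 v3"
  shows "has_CM L"
proof -
  define \<mu> where "\<mu> = cis \<alpha>"
  have mu0: "\<mu> \<noteq> 0" unfolding \<mu>_def by simp
  have Imu: "Im \<mu> > 0" unfolding \<mu>_def using al by (simp add: sin_gt_zero)
  obtain t1 l1 r1 l1' where A1: "t1 \<noteq> 0" "v1 = of_real t1 * l1" "l1 \<in> L" "l1 \<noteq> 0" "r1 \<noteq> 0" "l1' \<in> L"
     "l1' \<noteq> 0" "\<mu> * l1 = of_real r1 * l1'" using dirE[OF v1] unfolding \<mu>_def by metis
  obtain t2 l2 r2 l2' where A2: "t2 \<noteq> 0" "v2 = of_real t2 * l2" "l2 \<in> L" "l2 \<noteq> 0" "r2 \<noteq> 0" "l2' \<in> L"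
     "l2' \<noteq> 0" "\<mu> * l2 = of_real r2 * l2'" using dirE[OF v2] unfolding \<mu>_def by metis
  obtain t3 l3 r3 l3' where A3: "t3 \<noteq> 0" "v3 = of_real t3 * l3" "l3 \<in> L" "l3 \<noteq> 0" "r3 \<noteq> 0" "l3' \<in> L"
     "l3' \<noteq> 0" "\<mu> * l3 = of_real r3 * l3'" using dirE[OF v3] unfolding \<mu>_def by metis
  have m12: "\<not> real_proportional l1 l2" using np_transfer[OF n12 A1(2) A2(2) A1(1)] .
  have m13: "\<not> real_proportional l1 l3" using np_transfer[OF n13 A1(2) A3(2) A1(1)] .
  have m23: "\<not> real_proportional l2 l3" using np_transfer[OF n23 A2(2) A3(2) A2(1)] .
  have m12': "\<not> real_proportional l1' l2'" using np_transfer2[OF m12 A1(8) A2(8) mu0 A1(5)] .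
  obtain a1 a2 where a: "a1 \<in> \<rat>" "a2 \<in> \<rat>" "l1 = of_real a1 * w1 + of_real a2 * w2" using latE A1(3) L by metis
  obtain b1 b2 where b: "b1 \<in> \<rat>" "b2 \<in> \<rat>" "l2 = of_real b1 * w1 + of_real b2 * w2" using latE A2(3) L by metis
  obtain c1 c2 where c: "c1 \<in> \<rat>" "c2 \<in> \<rat>" "l3 = of_real c1 * w1 + of_real c2 * w2" using latE A3(3) L by metis
  obtain p1 p2 where p: "p1 \<in> \<rat>" "p2 \<in> \<rat>" "l1' = of_real p1 * w1 + of_real p2 * w2" using latE A1(6) L by metis
  obtain q1 q2 where q: "q1 \<in> \<rat>" "q2 \<in> \<rat>" "l2' = of_real q1 * w1 + of_real q2 * w2" using latE A2(6) L by metis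
  obtain s1 s2 where s: "s1 \<in> \<rat>" "s2 \<in> \<rat>" "l3' = of_real s1 * w1 + of_real s2 * w2" using latE A3(6) L by metis
  define D where "D = a1*b2 - a2*b1"
  have D0: "D \<noteq> 0" unfolding D_def using det_nz[OF a(3) b(3) A1(4) m12] .
  define D' where "D' = p1*q2 - p2*q1"
  have D'0: "D' \<noteq> 0" unfolding D'_def using det_nz[OF p(3) q(3) A1(7) m12'] .
  define x where "x = (c1*b2 - c2*b1)/D"
  define y where "y = (a1*c2 - a2*c1)/D"
  define x' where "x' = (s1*q2 - s2*q1)/D'"
  define y' where "y' = (p1* s2 - p2* s1)/D'"
  have l3e: "l3 = of_real x * l1 + of_real y * l2"
    unfolding c(3) a(3) b(3) x_def y_def D_def using cramer[OF D0[unfolded D_def]] by blast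
  have l3'e: "l3' = of_real x' * l1' + of_real y' * l2'"
    unfolding s(3) p(3) q(3) x'_def y'_def D'_def using cramer[OF D'0[unfolded D'_def]] by blast
  have xQ: "x \<in> \<rat>" "y \<in> \<rat>" "x' \<in> \<rat>" "y' \<in> \<rat>"
    unfolding x_def y_def x'_def y'_def D_def D'_def using a b c p q s by auto
  have x0: "x \<noteq> 0"
  proof
    assume "x = 0" hence "l3 = of_real y * l2" using l3e by simp
    thus False using m23 unfolding real_proportional_def by blast
  qed
  have y0: "y \<noteq> 0"
  proof
    assume "y = 0" hence "l3 = of_real x * l1" using l3e by simp
    thus False using m13 unfolding real_proportional_def by blast
  qed
  have "of_real (x*r1 - r3*x') * l1' + of_real (y*r2 - r3*y') * l2' = 0"
  proof -
    have "of_real (x*r1 - r3*x') * l1' + of_real (y*r2 - r3*y') * l2'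
       = of_real x * (of_real r1 * l1') + of_real y * (of_real r2 * l2') - of_real r3 * (of_real x' * l1' + of_real y' * l2')"
      by (simp add: algebra_simps)
    also have "\<dots> = \<mu> * l3 - of_real r3 * l3'" unfolding A1(8)[symmetric] A2(8)[symmetric] l3e l3'e
      by (simp add: algebra_simps)
    also have "\<dots> = 0" using A3(8) by simp
    finally show ?thesis .
  qed
  from indep[OF m12' A1(7) this] have e1: "x*r1 = r3*x'" and e2: "y*r2 = r3*y'" by auto
  have x'0: "x' \<noteq> 0" using e1 x0 A1(5) by auto
  define \<rho> where "\<rho> = r2/r1"
  have rhoe: "\<rho> = (x*y')/(y*x')"
  proof -
    have h1: "r1 = r3*x'/x" and h2: "r2 = r3*y'/y" using e1 e2 x0 y0 by (simp_all add: field_simps)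
    show ?thesis unfolding \<rho>_def h1 h2 using A3(5) x'0 x0 y0 by (simp add: field_simps)
  qed
  have rhoQ: "\<rho> \<in> \<rat>" unfolding rhoe using xQ by auto
  define \<nu> where "\<nu> = \<mu> / of_real r1"
  have nu1: "\<nu> * l1 = l1'" unfolding \<nu>_def using A1(8) A1(5) by (simp add: field_simps)
  have nu2: "\<nu> * l2 = of_real \<rho> * l2'" unfolding \<nu>_def \<rho>_def using A2(8) A1(5) by (simp add: field_simps)
  define X1 where "X1 = (1*b2 - 0*b1)/D"
  define Y1 where "Y1 = (a1*0 - a2*1)/D"
  define X2 where "X2 = (0*b2 - 1*b1)/D"
  define Y2 where "Y2 = (a1*1 - a2*0)/D"
  have w1e: "w1 = of_real X1 * l1 + of_real Y1 * l2"
    using cramer[OF D0[unfolded D_def], of 1 w1 0 w2] unfolding X1_def Y1_def D_def a(3) b(3) by simp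
  have w2e: "w2 = of_real X2 * l1 + of_real Y2 * l2"
    using cramer[OF D0[unfolded D_def], of 0 w1 1 w2] unfolding X2_def Y2_def D_def a(3) b(3) by simp
  have XQ: "X1 \<in> \<rat>" "Y1 \<in> \<rat>" "X2 \<in> \<rat>" "Y2 \<in> \<rat>"
    unfolding X1_def Y1_def X2_def Y2_def D_def using a b by auto
  define A where "A = X1*p1 + Y1*\<rho>*q1"
  define B where "B = X1*p2 + Y1*\<rho>*q2"
  define C where "C = X2*p1 + Y2*\<rho>*q1"
  define Dd where "Dd = X2*p2 + Y2*\<rho>*q2"
  have ABQ: "A \<in> \<rat>" "B \<in> \<rat>" "C \<in> \<rat>" "Dd \<in> \<rat>"
    unfolding A_def B_def C_def Dd_def using XQ rhoQ p q by auto
  have nw1: "\<nu> * w1 = of_real A * w1 + of_real B * w2"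
  proof -
    have "\<nu> * w1 = of_real X1 * (\<nu> * l1) + of_real Y1 * (\<nu> * l2)" unfolding w1e by (simp add: algebra_simps)
    also have "\<dots> = of_real A * w1 + of_real B * w2" unfolding nu1 nu2 p(3) q(3) A_def B_def
      by (simp add: algebra_simps)
    finally show ?thesis .
  qed
  have nw2: "\<nu> * w2 = of_real C * w1 + of_real Dd * w2"
  proof -
    have "\<nu> * w2 = of_real X2 * (\<nu> * l1) + of_real Y2 * (\<nu> * l2)" unfolding w2e by (simp add: algebra_simps)
    also have "\<dots> = of_real C * w1 + of_real Dd * w2" unfolding nu1 nu2 p(3) q(3) C_def Dd_def
      by (simp add: algebra_simps)
    finally show ?thesis .
  qed
  have w20: "w2 \<noteq> 0" using w by auto
  define \<tau> where "\<tau> = w1 / w2"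
  have w1t: "w1 = \<tau> * w2" unfolding \<tau>_def using w20 by simp
  have nuC: "\<nu> = of_real C * \<tau> + of_real Dd"
  proof -
    have "\<nu> * w2 = (of_real C * \<tau> + of_real Dd) * w2" unfolding nw2 w1t by (simp add: algebra_simps)
    thus ?thesis using w20 by simp
  qed
  have nuA: "\<nu> * \<tau> = of_real A * \<tau> + of_real B"
  proof -
    have "(\<nu> * \<tau>) * w2 = (of_real A * \<tau> + of_real B) * w2" using nw1 unfolding w1t by (simp add: algebra_simps)
    thus ?thesis using w20 by simp
  qed
  have quad: "of_real C * \<tau>^2 + of_real (Dd - A) * \<tau> + of_real (-B) = 0"
  proof -
    have "of_real C * \<tau>^2 + of_real (Dd - A) * \<tau> + of_real (-B) = \<nu> * \<tau> - (of_real A * \<tau> + of_real B)"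
      unfolding nuC by (simp add: algebra_simps power2_eq_square)
    thus ?thesis using nuA by simp
  qed
  have C0: "C \<noteq> 0"
  proof
    assume "C = 0"
    hence "Im \<nu> = 0" using nuC by simp
    moreover have "Im \<nu> = Im \<mu> / r1" unfolding \<nu>_def by simp
    ultimately show False using Imu A1(5) by simp
  qed
  have Imt: "Im \<tau> \<noteq> 0"
  proof
    assume "Im \<tau> = 0"
    hence "\<tau> = of_real (Re \<tau>)" by (simp add: complex_eq_iff)
    hence tr: "\<tau> = of_real (Re \<tau>)" .
    hence ct: "cnj \<tau> = \<tau>" by (metis complex_cnj_complex_of_real)
    have "cnj w1 * w2 = \<tau> * (cnj w2 * w2)" unfolding w1t using ct by (simp add: algebra_simps)
    hence "cnj w1 * w2 = of_real (Re \<tau>) * (cnj w2 * w2)" using tr by simp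
    also have "cnj w2 * w2 = of_real ((cmod w2)^2)" by (simp add: complex_norm_square[symmetric] mult.commute del: of_real_power)
    finally have "Im (cnj w1 * w2) = 0" by simp
    thus False using w by simp
  qed
  obtain n1 :: int where n1: "n1 > 0" "of_int n1 * C \<in> \<int>" using rat_denom[OF ABQ(3)] by blast
  have DAQ: "Dd - A \<in> \<rat>" "-B \<in> \<rat>" using ABQ by auto
  obtain n2 :: int where n2: "n2 > 0" "of_int n2 * (Dd - A) \<in> \<int>" using rat_denom[OF DAQ(1)] by blast
  obtain n3 :: int where n3: "n3 > 0" "of_int n3 * (-B) \<in> \<int>" using rat_denom[OF DAQ(2)] by blast
  define N where "N = n1*n2*n3"
  have N0: "N \<noteq> 0" unfolding N_def using n1 n2 n3 by simp
  have "of_int N * C = of_int (n2*n3) * (of_int n1 * C)" unfolding N_def by (simp add: algebra_simps)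
  hence "of_int N * C \<in> \<int>" using n1 by (metis Ints_mult Ints_of_int)
  then obtain ia where ia: "of_int N * C = of_int ia" by (rule Ints_cases)
  have "of_int N * (Dd - A) = of_int (n1*n3) * (of_int n2 * (Dd - A))" unfolding N_def by (simp add: algebra_simps)
  hence "of_int N * (Dd - A) \<in> \<int>" using n2 by (metis Ints_mult Ints_of_int)
  then obtain ib where ib: "of_int N * (Dd - A) = of_int ib" by (rule Ints_cases)
  have "of_int N * (-B) = of_int (n1*n2) * (of_int n3 * (-B))" unfolding N_def by (simp add: algebra_simps)
  hence "of_int N * (-B) \<in> \<int>" using n3 by (metis Ints_mult Ints_of_int)
  then obtain ic where ic: "of_int N * (-B) = of_int ic" by (rule Ints_cases)
  have ia0: "ia \<noteq> 0"
  proof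
    assume "ia = 0" hence "of_int N * C = 0" using ia by simp
    thus False using N0 C0 by simp
  qed
  have "of_int ia * \<tau>^2 + of_int ib * \<tau> + of_int ic
      = of_real (of_int N) * (of_real C * \<tau>^2 + of_real (Dd - A) * \<tau> + of_real (-B))"
  proof -
    have "(of_int ia :: complex) = of_real (of_int ia)" by simp
    have "of_int ia * \<tau>^2 + of_int ib * \<tau> + of_int ic
        = of_real (of_int ia) * \<tau>^2 + of_real (of_int ib) * \<tau> + (of_real (of_int ic) :: complex)" by simp
    also have "\<dots> = of_real (of_int N * C) * \<tau>^2 + of_real (of_int N * (Dd - A)) * \<tau> + of_real (of_int N * (-B))"
      unfolding ia ib ic ..
    also have "\<dots> = of_real (of_int N) * (of_real C * \<tau>^2 + of_real (Dd - A) * \<tau> + of_real (-B))"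
      by (simp only: of_real_mult) (simp add: algebra_simps)
    finally show ?thesis .
  qed
  hence qi: "of_int ia * \<tau>^2 + of_int ib * \<tau> + of_int ic = 0" unfolding quad by simp
  have iq: "imag_quadratic \<tau>" unfolding imag_quadratic_def using Imt ia0 qi by blast
  have "L = (\<lambda>z. w2 * z) ` lattice_of \<tau> 1" unfolding lattice_scale L w1t by (simp add: mult.commute)
  thus ?thesis unfolding has_CM_def using iq w20 by blast
qed

theorem theorem1p5:
  fixes L :: "complex set"
  assumes "is_lattice L"
  shows "(\<forall>\<alpha>\<in>{0<..<pi}. (\<exists>S. finite S \<and> card S \<ge> 4 \<and> S \<subseteq> angle_pair_dirs L \<alpha>
                                 \<and> pairwise_nonprop S) \<longrightarrow> has_CM L)
       \<and> (has_CM L \<longrightarrow>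
            infinite {\<alpha>\<in>{0<..<pi}. \<exists>S. infinite S \<and> S \<subseteq> angle_pair_dirs L \<alpha> \<and> pairwise_nonprop S})"
proof (intro conjI ballI impI)
  show "infinite {\<alpha>\<in>{0<..<pi}. \<exists>S. infinite S \<and> S \<subseteq> angle_pair_dirs L \<alpha> \<and> pairwise_nonprop S}"
    if "has_CM L" using part2[OF that] .
next
  fix \<alpha> assume al: "\<alpha> \<in> {0<..<pi}"
  assume "\<exists>S. finite S \<and> card S \<ge> 4 \<and> S \<subseteq> angle_pair_dirs L \<alpha> \<and> pairwise_nonprop S"
  then obtain S where S: "finite S" "card S \<ge> 4" "S \<subseteq> angle_pair_dirs L \<alpha>" "pairwise_nonprop S" by blast
  obtain T where T: "T \<subseteq> S" "card T = 3" proof -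
    have "3 \<le> card S" using S(2) by simp
    thus ?thesis using obtain_subset_with_card_n[of 3 S] that by blast
  qed
  then obtain v1 v2 v3 where v: "T = {v1,v2,v3}" "v1 \<noteq> v2" "v2 \<noteq> v3" "v1 \<noteq> v3"
    unfolding card_3_iff by blast
  obtain w1 w2 where w: "Im (cnj w1 * w2) \<noteq> 0" "L = lattice_of w1 w2"
    using assms unfolding is_lattice_def by blast
  have vin: "v1 \<in> S" "v2 \<in> S" "v3 \<in> S" using T v by auto
  show "has_CM L"
  proof (rule part1[OF w, of \<alpha> v1 v2 v3])
    show "0 < \<alpha>" "\<alpha> < pi" using al by auto
    show "v1 \<in> angle_pair_dirs L \<alpha>" "v2 \<in> angle_pair_dirs L \<alpha>" "v3 \<in> angle_pair_dirs L \<alpha>"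
      using vin S(3) by auto
    show "\<not> real_proportional v1 v2" "\<not> real_proportional v1 v3" "\<not> real_proportional v2 v3"
      using S(4) vin v(2,3,4) unfolding pairwise_nonprop_def by blast+
  qed
qed

end
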